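(* Let $\mathcal F_0\subset\mathcal F_1\subset\dots\subset\mathcal F_T$ be a filtration, $\alpha=(\alpha_k,\dots,\alpha_{k_{\max}})$ a probability distribution on $\{k,\dots,k_{\max}\}$, $c_{\max}>0$ and $\delta\in(0,1)$. Let $i_1,\dots,i_T$ be random indices with $i_t$ being $\mathcal F_t$-measurable, distributed according to $\alpha$, and independent of $\mathcal F_{t-1}$, and let $c_1,\dots,c_T\in[0,c_{\max}]$ with $c_t$ being $\mathcal F_{t-1}$-measurable. Define $C^{\mathsf a}_t=\sum_{\tau\le t}c_\tau$, $C^{\mathsf r}_t=\sqrt{t\sum_{\tau\le t}c_\tau^2}$, $C^{\mathsf a}_{t,i}=\sum_{\tau\le t}\mathbf 1[i_\tau=i]c_\tau$ and $C^{\mathsf r}_{t,i}=\sqrt{\big(\sum_{\tau\le t}\mathbf 1[i_\tau=i]\big)\big(\sum_{\tau\le t}\mathbf 1[i_\tau=i]c_\tau^2\big)}$. Then for any fixed $i$, with probability at least $1-3\delta$, for all $t\le T$, $$C^{\mathsf a}_{t,i}\le1.25\alpha_iC^{\mathsf a}_t+21c_{\max}\log(T/\delta),$$ $$C^{\mathsf r}_{t,i}\le1.25\alpha_iC^{\mathsf r}_t+8c_{\max}\sqrt{\alpha_it\log(T/\delta)}+21c_{\max}\log(T/\delta).$$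
   Context: In the paper, $c_t$ is the corruption level of round $t$, chosen by an adaptive adversary based on the history up to round $t-1$, and $i_t$ is the index of the base algorithm sampled independently from $\alpha$ in round $t$ of the procedure BASIC; $C^{\mathsf a}_{t,i}$, $C^{\mathsf r}_{t,i}$ are the (arithmetic / root-mean-square type) corruption experienced by base algorithm $i$. $\log$ is the natural logarithm. *)

theory Defs
  imports "HOL-Probability.Probability"
begin

definition Ca :: "(nat \<Rightarrow> 'a \<Rightarrow> real) \<Rightarrow> nat \<Rightarrow> 'a \<Rightarrow> real" where
  "Ca c t x = (\<Sum>\<tau>\<in>{1..t}. c \<tau> x)"

definition Cr :: "(nat \<Rightarrow> 'a \<Rightarrow> real) \<Rightarrow> nat \<Rightarrow> 'a \<Rightarrow> real" where
  "Cr c t x = sqrt (real t * (\<Sum>\<tau>\<in>{1..t}. (c \<tau> x)^2))"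

definition Cai :: "(nat \<Rightarrow> 'a \<Rightarrow> real) \<Rightarrow> (nat \<Rightarrow> 'a \<Rightarrow> nat) \<Rightarrow> nat \<Rightarrow> nat \<Rightarrow> 'a \<Rightarrow> real" where
  "Cai c I t j x = (\<Sum>\<tau>\<in>{1..t}. (if I \<tau> x = j then 1 else 0) * c \<tau> x)"

definition Cri :: "(nat \<Rightarrow> 'a \<Rightarrow> real) \<Rightarrow> (nat \<Rightarrow> 'a \<Rightarrow> nat) \<Rightarrow> nat \<Rightarrow> nat \<Rightarrow> 'a \<Rightarrow> real" where
  "Cri c I t j x = sqrt ((\<Sum>\<tau>\<in>{1..t}. (if I \<tau> x = j then 1 else 0))
                       * (\<Sum>\<tau>\<in>{1..t}. (if I \<tau> x = j then 1 else 0) * (c \<tau> x)^2))"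

end

theory Submission
  imports Defs
begin


lemma bounded_integrable:
  assumes "prob_space M" "f \<in> borel_measurable M" "\<And>x. x \<in> space M \<Longrightarrow> \<bar>f x\<bar> \<le> B"
  shows "integrable M (f :: 'a \<Rightarrow> real)"
proof -
  interpret prob_space M by fact
  show ?thesis
    by (rule integrable_const_bound[where B=B]) (use assms in auto)
qed

lemma indep_mult:
  fixes W :: "'a \<Rightarrow> real" and Y :: "'a \<Rightarrow> nat"
  assumes M: "prob_space M" and G: "subalgebra M G"
    and ind: "prob_space.indep_set M (sets G) (sets (vimage_algebra (space M) Y (count_space UNIV)))"
    and W: "W \<in> borel_measurable G" and Y: "Y \<in> measurable M (count_space UNIV)"
    and B: "\<And>x. x \<in> space M \<Longrightarrow> \<bar>W x\<bar> \<le> B"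
  shows "integral\<^sup>L M (\<lambda>x. W x * (if Y x = j then 1 else 0)) = integral\<^sup>L M W * measure M {x\<in>space M. Y x = j}"
proof -
  interpret prob_space M by fact
  have spG: "space G = space M" and sG: "sets G \<subseteq> sets M" using G by (auto simp: subalgebra_def)
  have WM: "W \<in> borel_measurable M" using measurable_from_subalg[OF G W] .
  have s1: "sigma_sets (space M) {W -` A \<inter> space M | A. A \<in> sets borel} \<subseteq> sets G"
  proof -
    have "{W -` A \<inter> space M | A. A \<in> sets borel} \<subseteq> sets G"
      using W spG by (auto simp: measurable_def)
    from sets.sigma_sets_subset[OF this] spG show ?thesis by simp
  qed
  define Y' where "Y' = (\<lambda>x. if Y x = j then 1 else 0::real)"
  have s2: "sigma_sets (space M) {Y' -` A \<inter> space M | A. A \<in> sets borel}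
      \<subseteq> sets (vimage_algebra (space M) Y (count_space UNIV))"
    unfolding sets_vimage_algebra
  proof (rule sigma_sets_subseteq, rule subsetI)
    fix S assume "S \<in> {Y' -` A \<inter> space M | A. A \<in> sets borel}"
    then obtain A where S: "S = Y' -` A \<inter> space M" by blast
    define B where "B = {l. (if l = j then 1 else 0::real) \<in> A}"
    have "S = Y -` B \<inter> space M" unfolding S Y'_def B_def by (simp add: vimage_def)
    then show "S \<in> {Y -` A \<inter> space M | A. A \<in> sets (count_space UNIV)}"
      by (intro CollectI exI[of _ B]) simp
  qed
  have isd: "indep_set (sigma_sets (space M) {W -` A \<inter> space M | A. A \<in> sets borel})
        (sigma_sets (space M) {Y' -` A \<inter> space M | A. A \<in> sets borel})"
    proof (rule indep_setI)
      show "sigma_sets (space M) {W -` A \<inter> space M | A. A \<in> sets borel} \<subseteq> events"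
        using s1 sG by auto
      show "sigma_sets (space M) {Y' -` A \<inter> space M | A. A \<in> sets borel} \<subseteq> events"
        using indep_setD_ev2[OF ind] s2 by auto
      fix a b assume "a \<in> sigma_sets (space M) {W -` A \<inter> space M | A. A \<in> sets borel}"
        "b \<in> sigma_sets (space M) {Y' -` A \<inter> space M | A. A \<in> sets borel}"
      then show "prob (a \<inter> b) = prob a * prob b"
        by (intro indep_setD[OF ind] subsetD[OF s1] subsetD[OF s2])
    qed
  have YM: "Y' \<in> borel_measurable M"
    using measurable_compose[OF Y, of "\<lambda>l. if l = j then 1 else 0::real" borel] by (simp add: Y'_def)
  have iv: "indep_var borel W borel Y'"
    unfolding indep_var_eq using isd WM YM by simp
  have int1: "integrable M W" using bounded_integrable[OF M WM B] .
  have int2: "integrable M (\<lambda>x. if Y x = j then 1 else 0::real)"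
    by (rule bounded_integrable[OF M YM[unfolded Y'_def], of 1]) auto
  have "integral\<^sup>L M (\<lambda>x. W x * (if Y x = j then 1 else 0)) =
      integral\<^sup>L M W * integral\<^sup>L M (\<lambda>x. if Y x = j then 1 else 0::real)"
    using indep_var_lebesgue_integral[OF iv] int1 int2 by (simp add: Y'_def)
  also have "integral\<^sup>L M (\<lambda>x. if Y x = j then 1 else 0::real) = integral\<^sup>L M (indicator {x\<in>space M. Y x = j})"
    by (rule Bochner_Integration.integral_cong) (auto simp: indicator_def)
  also have "\<dots> = measure M {x\<in>space M. Y x = j}"
    by (simp add: Int_absorb2 subset_eq)
  finally show ?thesis .
qed



lemma exp_small: "0 \<le> (x::real) \<Longrightarrow> x \<le> 1/4 \<Longrightarrow> exp x \<le> 1 + 1.25 * x"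
proof -
  assume a: "0 \<le> x" "x \<le> 1/4"
  have "exp x \<le> 1 + x + x\<^sup>2" by (rule exp_bound) (use a in auto)
  moreover have "x\<^sup>2 \<le> x / 4" using a by (simp add: power2_eq_square mult_left_mono[of x "1/4" x, simplified])
  ultimately show ?thesis by simp
qed

lemma alg_l1: "(Z::real) * ((1 + i * (E - 1)) / g) = Z / g + Z * (E - 1) / g * i"
  by (simp add: ring_distribs add_divide_distrib mult_ac)

lemma alg_l2: "1 \<le> (1::real) + a * (E - 1) \<Longrightarrow> Z / (1 + a * (E - 1)) + a * (Z * (E - 1) / (1 + a * (E - 1))) = Z"
proof -
  assume h: "1 \<le> (1::real) + a * (E - 1)"
  then have nz: "(1::real) + a * (E - 1) \<noteq> 0" by linarith
  have "Z / (1 + a * (E - 1)) + a * (Z * (E - 1) / (1 + a * (E - 1))) = Z * (1 + a * (E - 1)) / (1 + a * (E - 1))"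
    by (simp add: ring_distribs add_divide_distrib mult_ac)
  also have "\<dots> = Z" using nz by simp
  finally show ?thesis .
qed

lemma div_ge1: "0 \<le> (a::real) \<Longrightarrow> 1 \<le> g \<Longrightarrow> 0 \<le> a / g \<and> a / g \<le> a"
proof -
  assume a: "0 \<le> a" and g: "1 \<le> g"
  have "a / g \<le> a / 1" using a g by (intro divide_left_mono) auto
  then show ?thesis using a g by simp
qed

lemma key:
  fixes M :: "'a measure" and F :: "nat \<Rightarrow> 'a measure"
    and I :: "nat \<Rightarrow> 'a \<Rightarrow> nat" and d :: "nat \<Rightarrow> 'a \<Rightarrow> real"
    and \<alpha> D L :: real and T j t :: nat
  assumes M: "prob_space M"
    and filt_sub: "\<And>t. t \<le> T \<Longrightarrow> subalgebra M (F t)"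
    and filt_mono: "\<And>s t. s \<le> t \<Longrightarrow> t \<le> T \<Longrightarrow> subalgebra (F t) (F s)"
    and I_meas: "\<And>t. t \<in> {1..T} \<Longrightarrow> I t \<in> measurable (F t) (count_space UNIV)"
    and I_dist: "\<And>t. t \<in> {1..T} \<Longrightarrow> measure M {x \<in> space M. I t x = j} = \<alpha>"
    and I_indep: "\<And>t. t \<in> {1..T} \<Longrightarrow>
                   prob_space.indep_set M (sets (F (t - 1)))
                     (sets (vimage_algebra (space M) (I t) (count_space UNIV)))"
    and d_meas: "\<And>t. t \<in> {1..T} \<Longrightarrow> d t \<in> borel_measurable (F (t - 1))"
    and d_range: "\<And>t x. t \<in> {1..T} \<Longrightarrow> x \<in> space M \<Longrightarrow> 0 \<le> d t x \<and> d t x \<le> D"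
    and D: "D > 0" and t: "t \<in> {1..T}"
  shows "\<exists>A\<in>sets M. {x\<in>space M. \<not> ((\<Sum>\<tau>\<in>{1..t}. (if I \<tau> x = j then 1 else 0) * d \<tau> x)
            \<le> 1.25 * \<alpha> * (\<Sum>\<tau>\<in>{1..t}. d \<tau> x) + 4 * D * L)} \<subseteq> A
           \<and> measure M A \<le> exp (- L)"
proof -
  interpret prob_space M by fact
  have a0: "\<alpha> \<ge> 0" using I_dist[OF t] by (metis measure_nonneg)
  define lam where "lam = 1 / (4 * D)"
  have lam: "lam > 0" "lam * D = 1/4" using D by (auto simp: lam_def)
  define ind where "ind \<tau> x = (if I \<tau> x = j then 1 else 0::real)" for \<tau> x
  define e where "e \<tau> x = exp (lam * ind \<tau> x * d \<tau> x)" for \<tau> x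
  define g where "g \<tau> x = 1 + \<alpha> * (exp (lam * d \<tau> x) - 1)" for \<tau> x
  define Z where "Z n x = (\<Prod>\<tau>\<in>{1..n}. e \<tau> x / g \<tau> x)" for n x
  have mF: "ind \<tau> \<in> borel_measurable (F n) \<and> d \<tau> \<in> borel_measurable (F n)"
    if "\<tau> \<in> {1..n}" "n \<le> T" for \<tau> n
  proof
    have "I \<tau> \<in> measurable (F n) (count_space UNIV)"
      using measurable_from_subalg[OF filt_mono I_meas] that by auto
    then show "ind \<tau> \<in> borel_measurable (F n)"
      unfolding ind_def using measurable_compose[of "I \<tau>" "F n" "count_space UNIV" "\<lambda>l. if l = j then 1 else 0::real" borel]
      by simp
    show "d \<tau> \<in> borel_measurable (F n)"
      using measurable_from_subalg[OF filt_mono d_meas] that by auto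
  qed
  have mEG: "e \<tau> \<in> borel_measurable (F n) \<and> g \<tau> \<in> borel_measurable (F n)"
    if "\<tau> \<in> {1..n}" "n \<le> T" for \<tau> n
  proof -
    note m = mF[OF that, THEN conjunct1] mF[OF that, THEN conjunct2]
    have m1: "(\<lambda>x. lam * ind \<tau> x * d \<tau> x) \<in> borel_measurable (F n)"
      by (intro borel_measurable_times borel_measurable_const m)
    have m2: "(\<lambda>x. lam * d \<tau> x) \<in> borel_measurable (F n)"
      by (intro borel_measurable_times borel_measurable_const m)
    have m3: "(\<lambda>x. exp (lam * d \<tau> x)) \<in> borel_measurable (F n)"
      using measurable_compose[OF m2 borel_measurable_exp] .
    show ?thesis unfolding e_def g_def
      using measurable_compose[OF m1 borel_measurable_exp]
      by (intro conjI borel_measurable_add borel_measurable_times borel_measurable_diff borel_measurable_const m3) auto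
  qed
  have expm: "(\<lambda>x. exp (lam * d \<tau> x)) \<in> borel_measurable N" if "d \<tau> \<in> borel_measurable N" for \<tau> N
  proof -
    have m2: "(\<lambda>x. lam * d \<tau> x) \<in> borel_measurable N"
      by (intro borel_measurable_times borel_measurable_const that)
    show ?thesis using measurable_compose[OF m2 borel_measurable_exp] .
  qed
  have gm: "g \<tau> \<in> borel_measurable N" if "d \<tau> \<in> borel_measurable N" for \<tau> N
    unfolding g_def
    by (intro borel_measurable_add borel_measurable_times borel_measurable_diff borel_measurable_const expm that)
  have gb: "1 \<le> g \<tau> x" "g \<tau> x \<le> exp (1.25 * \<alpha> * lam * d \<tau> x)"
    and eb: "1 \<le> e \<tau> x" "e \<tau> x \<le> exp (lam * D)"
    and ee: "e \<tau> x = 1 + ind \<tau> x * (exp (lam * d \<tau> x) - 1)"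
    if "\<tau> \<in> {1..T}" "x \<in> space M" for \<tau> x
  proof -
    have d0: "0 \<le> d \<tau> x" "d \<tau> x \<le> D" using d_range that by auto
    have l0: "0 \<le> lam * d \<tau> x" using d0 lam by simp
    have "lam * d \<tau> x \<le> lam * D" using d0 lam by (intro mult_left_mono) auto
    then have l1: "lam * d \<tau> x \<le> 1/4" using lam(2) by simp
    have ex1: "1 \<le> exp (lam * d \<tau> x)" using l0 by simp
    show "1 \<le> g \<tau> x" unfolding g_def using a0 ex1 by simp
    have "exp (lam * d \<tau> x) - 1 \<le> 1.25 * (lam * d \<tau> x)" using exp_small[OF l0 l1] by simp
    then have "\<alpha> * (exp (lam * d \<tau> x) - 1) \<le> \<alpha> * (1.25 * (lam * d \<tau> x))"
      using a0 by (rule mult_left_mono)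
    then have "g \<tau> x \<le> 1 + 1.25 * \<alpha> * lam * d \<tau> x"
      unfolding g_def by (simp add: mult.assoc mult.left_commute)
    also have "\<dots> \<le> exp (1.25 * \<alpha> * lam * d \<tau> x)" by (rule exp_ge_add_one_self)
    finally show "g \<tau> x \<le> exp (1.25 * \<alpha> * lam * d \<tau> x)" .
    show "1 \<le> e \<tau> x" unfolding e_def ind_def using l0 by simp
    show "e \<tau> x \<le> exp (lam * D)" unfolding e_def ind_def using d0 lam by auto
    show "e \<tau> x = 1 + ind \<tau> x * (exp (lam * d \<tau> x) - 1)" unfolding e_def ind_def by simp
  qed
  have Zprop: "Z n \<in> borel_measurable (F n) \<and> (\<forall>x\<in>space M. 0 \<le> Z n x \<and> Z n x \<le> exp (lam * D) ^ n)
      \<and> integral\<^sup>L M (Z n) = 1" if "n \<le> T" for n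
    using that
  proof (induction n)
    case 0
    then show ?case by (simp add: Z_def prob_space)
  next
    case (Suc n)
    have nT: "n \<le> T" using Suc.prems by simp
    from Suc.IH[OF nT] have Zm: "Z n \<in> borel_measurable (F n)"
      and Zb: "\<And>x. x\<in>space M \<Longrightarrow> 0 \<le> Z n x \<and> Z n x \<le> exp (lam * D) ^ n"
      and Zi: "integral\<^sup>L M (Z n) = 1" by auto
    have sT: "Suc n \<in> {1..T}" using Suc.prems by simp
    have Zs: "Z (Suc n) = (\<lambda>x. Z n x * (e (Suc n) x / g (Suc n) x))"
      unfolding Z_def by (auto simp: mult.commute)
    have FnFs: "subalgebra (F (Suc n)) (F n)" using filt_mono[of n "Suc n"] Suc.prems by simp
    have subn: "subalgebra M (F n)" using filt_sub nT by simp
    have mEGs: "e (Suc n) \<in> borel_measurable (F (Suc n)) \<and> g (Suc n) \<in> borel_measurable (F (Suc n))"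
      using mEG[of "Suc n" "Suc n"] Suc.prems by simp
    have m1: "Z (Suc n) \<in> borel_measurable (F (Suc n))"
      unfolding Zs using mEGs measurable_from_subalg[OF FnFs Zm]
      by (intro borel_measurable_times borel_measurable_divide) auto
    have E: "exp (lam * D) \<ge> 1" using lam by simp
    have fb: "0 \<le> e (Suc n) x / g (Suc n) x \<and> e (Suc n) x / g (Suc n) x \<le> exp (lam * D)"
      if "x \<in> space M" for x
    proof -
      have "1 \<le> g (Suc n) x" "1 \<le> e (Suc n) x" "e (Suc n) x \<le> exp (lam * D)"
        using gb(1) eb sT that by auto
      then have "0 \<le> e (Suc n) x / g (Suc n) x \<and> e (Suc n) x / g (Suc n) x \<le> e (Suc n) x"
        by (intro div_ge1) auto
      then show ?thesis using \<open>e (Suc n) x \<le> exp (lam * D)\<close> by linarith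
    qed
    have b2: "\<forall>x\<in>space M. 0 \<le> Z (Suc n) x \<and> Z (Suc n) x \<le> exp (lam * D) ^ Suc n"
    proof
      fix x assume x: "x \<in> space M"
      have Z0: "0 \<le> Z n x" "Z n x \<le> exp (lam * D) ^ n" using Zb[OF x] by auto
      have f0: "0 \<le> e (Suc n) x / g (Suc n) x" "e (Suc n) x / g (Suc n) x \<le> exp (lam * D)"
        using fb[OF x] by auto
      have "Z n x * (e (Suc n) x / g (Suc n) x) \<le> exp (lam * D) ^ n * exp (lam * D)"
        by (rule mult_mono) (use Z0 f0 in auto)
      moreover have "0 \<le> Z n x * (e (Suc n) x / g (Suc n) x)"
        by (rule mult_nonneg_nonneg) (use Z0 f0 in auto)
      ultimately show "0 \<le> Z (Suc n) x \<and> Z (Suc n) x \<le> exp (lam * D) ^ Suc n"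
        unfolding Zs power_Suc2 by blast
    qed
    define u where "u x = Z n x / g (Suc n) x" for x
    define v where "v x = Z n x * (exp (lam * d (Suc n) x) - 1) / g (Suc n) x" for x
    have dSn: "d (Suc n) \<in> borel_measurable (F n)" using d_meas[OF sT] by simp
    have um: "u \<in> borel_measurable (F n)" unfolding u_def
      using Zm gm[OF dSn] by (intro borel_measurable_divide) auto
    have vm: "v \<in> borel_measurable (F n)" unfolding v_def
      using Zm gm[OF dSn] expm[OF dSn]
      by (intro borel_measurable_divide borel_measurable_times borel_measurable_diff borel_measurable_const) auto
    define B where "B = exp (lam * D) ^ n * exp (lam * D)"
    have ub: "\<bar>u x\<bar> \<le> B" and vb: "\<bar>v x\<bar> \<le> B" if x: "x \<in> space M" for x
    proof -
      have g1: "1 \<le> g (Suc n) x" using gb(1) sT x by auto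
      have d0: "0 \<le> d (Suc n) x" "d (Suc n) x \<le> D" using d_range sT x by auto
      have ld: "lam * d (Suc n) x \<le> lam * D" using d0 lam by (intro mult_left_mono) auto
      have ld0: "0 \<le> lam * d (Suc n) x" using d0 lam by simp
      have ex: "0 \<le> exp (lam * d (Suc n) x) - 1" "exp (lam * d (Suc n) x) - 1 \<le> exp (lam * D)"
      proof -
        have "exp (lam * d (Suc n) x) \<le> exp (lam * D)" using ld by simp
        then show "exp (lam * d (Suc n) x) - 1 \<le> exp (lam * D)" by linarith
        show "0 \<le> exp (lam * d (Suc n) x) - 1" using ld0 by simp
      qed
      have Z0: "0 \<le> Z n x" "Z n x \<le> exp (lam * D) ^ n" using Zb[OF x] by auto
      have "0 \<le> u x \<and> u x \<le> Z n x" unfolding u_def using div_ge1[OF Z0(1) g1] .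
      moreover have "exp (lam * D) ^ n * 1 \<le> exp (lam * D) ^ n * exp (lam * D)"
        by (rule mult_left_mono[OF E]) simp
      then have "Z n x \<le> B" unfolding B_def using Z0 by linarith
      ultimately show "\<bar>u x\<bar> \<le> B" by linarith
      have "0 \<le> v x \<and> v x \<le> Z n x * (exp (lam * d (Suc n) x) - 1)"
        unfolding v_def using div_ge1[OF mult_nonneg_nonneg[OF Z0(1) ex(1)] g1] .
      moreover have "Z n x * (exp (lam * d (Suc n) x) - 1) \<le> B" unfolding B_def
        using Z0 ex by (intro mult_mono) auto
      ultimately show "\<bar>v x\<bar> \<le> B" by linarith
    qed
    have YM: "I (Suc n) \<in> measurable M (count_space UNIV)"
      using measurable_from_subalg[OF filt_sub I_meas[OF sT]] Suc.prems by simp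
    have indM: "ind (Suc n) \<in> borel_measurable M"
      unfolding ind_def using measurable_compose[OF YM, of "\<lambda>l. if l = j then 1 else 0::real" borel]
      by simp
    have uM: "u \<in> borel_measurable M" using measurable_from_subalg[OF subn um] .
    have vM: "v \<in> borel_measurable M" using measurable_from_subalg[OF subn vm] .
    have ui: "integrable M u" by (rule bounded_integrable[OF M uM ub])
    have vi: "integrable M v" by (rule bounded_integrable[OF M vM vb])
    have vii: "integrable M (\<lambda>x. v x * ind (Suc n) x)"
    proof (rule bounded_integrable[OF M _, of _ B])
      show "(\<lambda>x. v x * ind (Suc n) x) \<in> borel_measurable M"
        using vM indM by (rule borel_measurable_times)
      fix x assume x: "x \<in> space M"
      have "0 \<le> B" using vb[OF x] by linarith
      then show "\<bar>v x * ind (Suc n) x\<bar> \<le> B"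
        using vb[OF x] by (auto simp: ind_def)
    qed
    have indep: "integral\<^sup>L M (\<lambda>x. v x * ind (Suc n) x) = integral\<^sup>L M v * \<alpha>"
      using indep_mult[OF M subn _ vm YM vb, of j] I_indep[OF sT] I_dist[OF sT]
      by (simp add: ind_def)
    have "integral\<^sup>L M (Z (Suc n)) = integral\<^sup>L M (\<lambda>x. u x + v x * ind (Suc n) x)"
    proof (rule Bochner_Integration.integral_cong)
      fix x assume x: "x \<in> space M"
      have g1: "1 \<le> g (Suc n) x" using gb(1) sT x by auto
      show "Z (Suc n) x = u x + v x * ind (Suc n) x"
        unfolding Zs u_def v_def ee[OF sT x] by (rule alg_l1)
    qed simp
    also have "\<dots> = integral\<^sup>L M u + integral\<^sup>L M v * \<alpha>"
      using ui vii indep by simp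
    also have "\<dots> = integral\<^sup>L M (\<lambda>x. u x + \<alpha> * v x)"
      using ui vi by (simp add: mult.commute)
    also have "\<dots> = integral\<^sup>L M (Z n)"
    proof (rule Bochner_Integration.integral_cong)
      fix x assume x: "x \<in> space M"
      have g1: "1 \<le> g (Suc n) x" using gb(1) sT x by auto
      show "u x + \<alpha> * v x = Z n x"
        using g1 unfolding u_def v_def g_def by (rule alg_l2)
    qed simp
    finally show ?case using m1 b2 Zi by simp
  qed
  have tT: "t \<le> T" using t by simp
  have ZtM: "Z t \<in> borel_measurable M"
    using measurable_from_subalg[OF filt_sub[OF tT]] Zprop[OF tT] by blast
  have Zt0: "\<And>x. x \<in> space M \<Longrightarrow> 0 \<le> Z t x" and Zt1: "integral\<^sup>L M (Z t) = 1"
    using Zprop[OF tT] by auto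
  have Zti: "integrable M (Z t)"
    using Zprop[OF tT] by (intro bounded_integrable[OF M ZtM, of "exp (lam * D) ^ t"]) auto
  define A where "A = {x\<in>space M. exp L \<le> Z t x}"
  have As: "A \<in> sets M" unfolding A_def using borel_measurable_le[OF borel_measurable_const ZtM] .
  have "measure M A \<le> integral\<^sup>L M (Z t) / exp L"
    unfolding A_def by (rule integral_Markov_inequality_measure[OF Zti As]) (use Zt0 in auto)
  also have "\<dots> = exp (- L)" using Zt1 by (simp add: exp_minus inverse_eq_divide)
  finally have mA: "measure M A \<le> exp (- L)" .
  have "{x\<in>space M. \<not> ((\<Sum>\<tau>\<in>{1..t}. (if I \<tau> x = j then 1 else 0) * d \<tau> x)
            \<le> 1.25 * \<alpha> * (\<Sum>\<tau>\<in>{1..t}. d \<tau> x) + 4 * D * L)} \<subseteq> A"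
  proof safe
    fix x assume x: "x \<in> space M" and
      nb: "\<not> ((\<Sum>\<tau>\<in>{1..t}. (if I \<tau> x = j then 1 else 0) * d \<tau> x)
            \<le> 1.25 * \<alpha> * (\<Sum>\<tau>\<in>{1..t}. d \<tau> x) + 4 * D * L)"
    define S where "S = (\<Sum>\<tau>\<in>{1..t}. ind \<tau> x * d \<tau> x)"
    define Sd where "Sd = (\<Sum>\<tau>\<in>{1..t}. d \<tau> x)"
    have nb': "S - 1.25 * \<alpha> * Sd > 4 * D * L" using nb unfolding S_def Sd_def ind_def by simp
    have "lam * (4 * D * L) < lam * (S - 1.25 * \<alpha> * Sd)"
      using nb' lam(1) by (rule mult_strict_left_mono)
    moreover have "lam * (4 * D * L) = L" using lam(2) by (simp add: algebra_simps)
    moreover have "lam * (S - 1.25 * \<alpha> * Sd) = lam * S - 1.25 * \<alpha> * lam * Sd"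
      by (simp add: algebra_simps)
    ultimately have Lle: "L \<le> lam * S - 1.25 * \<alpha> * lam * Sd" by linarith
    have tsub: "\<And>\<tau>. \<tau> \<in> {1..t} \<Longrightarrow> \<tau> \<in> {1..T}" using tT by auto
    have pe: "(\<Prod>\<tau>\<in>{1..t}. e \<tau> x) = exp (lam * S)"
      unfolding e_def S_def by (simp add: exp_sum sum_distrib_left mult.assoc)
    have pg: "(\<Prod>\<tau>\<in>{1..t}. g \<tau> x) \<le> exp (1.25 * \<alpha> * lam * Sd)"
    proof -
      have "(\<Prod>\<tau>\<in>{1..t}. g \<tau> x) \<le> (\<Prod>\<tau>\<in>{1..t}. exp (1.25 * \<alpha> * lam * d \<tau> x))"
        using gb[OF tsub x] by (intro prod_mono) (auto intro: order_trans[OF zero_le_one])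
      also have "\<dots> = exp (1.25 * \<alpha> * lam * Sd)"
        unfolding Sd_def by (simp add: exp_sum sum_distrib_left)
      finally show ?thesis .
    qed
    have pg0: "0 < (\<Prod>\<tau>\<in>{1..t}. g \<tau> x)"
      using gb(1)[OF tsub x] by (intro prod_pos) (auto intro: less_le_trans[OF zero_less_one])
    have "exp L \<le> exp (lam * S - 1.25 * \<alpha> * lam * Sd)" using Lle by simp
    also have "\<dots> = exp (lam * S) / exp (1.25 * \<alpha> * lam * Sd)" by (rule exp_diff)
    also have "\<dots> \<le> exp (lam * S) / (\<Prod>\<tau>\<in>{1..t}. g \<tau> x)"
      using pg pg0 by (intro divide_left_mono) auto
    also have "\<dots> = Z t x" unfolding Z_def pe[symmetric] by (simp add: prod_dividef)
    finally show "x \<in> A" unfolding A_def using x by simp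
  qed
  then show ?thesis using As mA by blast
qed



lemma alg:
  fixes N Q s t a cm L :: real
  assumes "0 \<le> N" "0 \<le> Q" "0 \<le> s" "s \<le> t * cm\<^sup>2" "0 \<le> a" "0 < cm" "0 \<le> L" "0 \<le> t"
    and hN: "N \<le> 1.25 * a * t + 4 * 1 * L" and hQ: "Q \<le> 1.25 * a * s + 4 * cm\<^sup>2 * L"
  shows "sqrt (N * Q) \<le> 1.25 * a * sqrt (t * s) + 8 * cm * sqrt (a * t * L) + 21 * cm * L"
proof -
  define A where "A = 1.25 * a * sqrt (t * s)"
  define B where "B = 4 * cm * sqrt (a * t * L)"
  define C where "C = 4 * cm * L"
  have A0: "0 \<le> A" and B0: "0 \<le> B" and C0: "0 \<le> C" using assms by (auto simp: A_def B_def C_def)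
  have ts: "(sqrt (t * s))\<^sup>2 = t * s" using assms by simp
  have atL: "(sqrt (a * t * L))\<^sup>2 = a * t * L" using assms by simp
  have A2: "A\<^sup>2 = (1.25 * a)\<^sup>2 * (t * s)" unfolding A_def
    by (simp only: power_mult_distrib ts)
  have B2: "B\<^sup>2 = 16 * cm\<^sup>2 * (a * t * L)" unfolding B_def
    by (simp only: power_mult_distrib atL) simp
  have C2: "C\<^sup>2 = 16 * cm\<^sup>2 * L\<^sup>2" unfolding C_def by (simp add: power_mult_distrib)
  have "N * Q \<le> (1.25 * a * t + 4 * L) * (1.25 * a * s + 4 * cm\<^sup>2 * L)"
    using assms by (intro mult_mono) auto
  also have "\<dots> = (1.25 * a)\<^sup>2 * (t * s) + 5 * a * t * cm\<^sup>2 * L + 5 * a * s * L + 16 * cm\<^sup>2 * L\<^sup>2"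
    by (simp add: algebra_simps power2_eq_square)
  also have "\<dots> \<le> (1.25 * a)\<^sup>2 * (t * s) + 10 * a * t * cm\<^sup>2 * L + 16 * cm\<^sup>2 * L\<^sup>2"
  proof -
    have "a * s * L \<le> a * (t * cm\<^sup>2) * L" using assms by (intro mult_right_mono mult_left_mono) auto
    then show ?thesis by (simp add: algebra_simps)
  qed
  also have "\<dots> \<le> A\<^sup>2 + B\<^sup>2 + C\<^sup>2" unfolding A2 B2 C2 using assms
    by (simp add: algebra_simps)
  also have "\<dots> \<le> (A + B + C)\<^sup>2" using A0 B0 C0 by (simp add: power2_eq_square algebra_simps)
  finally have "sqrt (N * Q) \<le> sqrt ((A + B + C)\<^sup>2)" by (rule real_sqrt_le_mono)
  also have "\<dots> = A + B + C" using A0 B0 C0 by simp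
  also have "\<dots> \<le> 1.25 * a * sqrt (t * s) + 8 * cm * sqrt (a * t * L) + 21 * cm * L"
    unfolding A_def B_def C_def using assms by (intro add_mono) (auto intro: mult_right_mono)
  finally show ?thesis .
qed



theorem lemma15:
  fixes M :: "'a measure" and F :: "nat \<Rightarrow> 'a measure"
    and I :: "nat \<Rightarrow> 'a \<Rightarrow> nat" and c :: "nat \<Rightarrow> 'a \<Rightarrow> real"
    and \<alpha> :: "nat \<Rightarrow> real" and k kmax T j :: nat and cmax \<delta> :: real
  assumes M: "prob_space M"
    and filt_sub: "\<And>t. t \<le> T \<Longrightarrow> subalgebra M (F t)"
    and filt_mono: "\<And>s t. s \<le> t \<Longrightarrow> t \<le> T \<Longrightarrow> subalgebra (F t) (F s)"
    and alpha_nonneg: "\<And>l. l \<in> {k..kmax} \<Longrightarrow> \<alpha> l \<ge> 0"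
    and alpha_sum: "(\<Sum>l\<in>{k..kmax}. \<alpha> l) = 1"
    and cmax: "cmax > 0"
    and delta: "0 < \<delta>" "\<delta> < 1"
    and I_meas: "\<And>t. t \<in> {1..T} \<Longrightarrow> I t \<in> measurable (F t) (count_space UNIV)"
    and I_range: "\<And>t x. t \<in> {1..T} \<Longrightarrow> x \<in> space M \<Longrightarrow> I t x \<in> {k..kmax}"
    and I_dist: "\<And>t l. t \<in> {1..T} \<Longrightarrow> l \<in> {k..kmax} \<Longrightarrow>
                   measure M {x \<in> space M. I t x = l} = \<alpha> l"
    and I_indep: "\<And>t. t \<in> {1..T} \<Longrightarrow>
                   prob_space.indep_set M (sets (F (t - 1)))
                     (sets (vimage_algebra (space M) (I t) (count_space UNIV)))"
    and c_meas: "\<And>t. t \<in> {1..T} \<Longrightarrow> c t \<in> borel_measurable (F (t - 1))"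
    and c_range: "\<And>t x. t \<in> {1..T} \<Longrightarrow> x \<in> space M \<Longrightarrow> 0 \<le> c t x \<and> c t x \<le> cmax"
    and j: "j \<in> {k..kmax}"
  shows "measure M {x \<in> space M. \<forall>t\<in>{1..T}.
            Cai c I t j x \<le> 1.25 * \<alpha> j * Ca c t x + 21 * cmax * ln (real T / \<delta>)
          \<and> Cri c I t j x \<le> 1.25 * \<alpha> j * Cr c t x
                 + 8 * cmax * sqrt (\<alpha> j * real t * ln (real T / \<delta>))
                 + 21 * cmax * ln (real T / \<delta>)} \<ge> 1 - 3 * \<delta>"
proof -
  interpret P: prob_space M by (rule M)
  show ?thesis
  proof (cases "T = 0")
    case True
    then have "{x \<in> space M. \<forall>t\<in>{1..T}.
            Cai c I t j x \<le> 1.25 * \<alpha> j * Ca c t x + 21 * cmax * ln (real T / \<delta>)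
          \<and> Cri c I t j x \<le> 1.25 * \<alpha> j * Cr c t x
                 + 8 * cmax * sqrt (\<alpha> j * real t * ln (real T / \<delta>))
                 + 21 * cmax * ln (real T / \<delta>)} = space M" by auto
    then show ?thesis using delta P.prob_space by simp
  next
    case False
    then have T1: "1 \<le> T" by simp
    define L where "L = ln (real T / \<delta>)"
    have L0: "0 < L" unfolding L_def using T1 delta by (intro ln_gt_zero) (simp add: field_simps)
    have eL: "exp (- L) = \<delta> / real T" unfolding L_def using delta T1
      by (simp add: exp_minus exp_ln inverse_eq_divide)
    have aj0: "0 \<le> \<alpha> j" using alpha_nonneg j by simp
    have Idj: "\<And>t. t \<in> {1..T} \<Longrightarrow> measure M {x \<in> space M. I t x = j} = \<alpha> j"
      using I_dist j by simp
    have indM: "(\<lambda>x. if I \<tau> x = j then 1 else 0::real) \<in> borel_measurable M" if "\<tau> \<in> {1..T}" for \<tau>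
    proof -
      have "I \<tau> \<in> measurable M (count_space UNIV)"
        using measurable_from_subalg[OF filt_sub I_meas[OF that]] that by simp
      then show ?thesis
        using measurable_compose[of "I \<tau>" M "count_space UNIV" "\<lambda>l. if l = j then 1 else 0::real" borel]
        by simp
    qed
    have cM: "c \<tau> \<in> borel_measurable M" if "\<tau> \<in> {1..T}" for \<tau>
    proof -
      have "\<tau> - 1 \<le> T" using that by (auto intro: order_trans[OF diff_le_self])
      then show ?thesis using measurable_from_subalg[OF filt_sub c_meas[OF that]] by simp
    qed
    have k1: "\<forall>t\<in>{1..T}. \<exists>A. A \<in> sets M \<and> {x\<in>space M. \<not> ((\<Sum>\<tau>\<in>{1..t}. (if I \<tau> x = j then 1 else 0) * c \<tau> x)
            \<le> 1.25 * \<alpha> j * (\<Sum>\<tau>\<in>{1..t}. c \<tau> x) + 4 * cmax * L)} \<subseteq> A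
           \<and> measure M A \<le> exp (- L)"
    proof (rule ballI)
      fix t assume t: "t \<in> {1..T}"
      show "\<exists>A. A \<in> sets M \<and> {x\<in>space M. \<not> ((\<Sum>\<tau>\<in>{1..t}. (if I \<tau> x = j then 1 else 0) * c \<tau> x)
            \<le> 1.25 * \<alpha> j * (\<Sum>\<tau>\<in>{1..t}. c \<tau> x) + 4 * cmax * L)} \<subseteq> A
           \<and> measure M A \<le> exp (- L)"
        using key[where M=M and F=F and I=I and T=T and d=c and D=cmax and L=L and j=j and \<alpha>="\<alpha> j", OF M filt_sub filt_mono I_meas Idj I_indep c_meas c_range cmax t]
        by (simp only: Bex_def)
    qed
    have k2: "\<forall>t\<in>{1..T}. \<exists>A. A \<in> sets M \<and> {x\<in>space M. \<not> ((\<Sum>\<tau>\<in>{1..t}. (if I \<tau> x = j then 1 else 0) * 1)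
            \<le> 1.25 * \<alpha> j * (\<Sum>\<tau>\<in>{1..t}. 1) + 4 * 1 * L)} \<subseteq> A
           \<and> measure M A \<le> exp (- L)"
    proof (rule ballI)
      fix t assume t: "t \<in> {1..T}"
      have one_m: "\<And>t. t \<in> {1..T} \<Longrightarrow> (\<lambda>_. 1::real) \<in> borel_measurable (F (t - 1))" by simp
      have one_r: "\<And>t x. t \<in> {1..T} \<Longrightarrow> x \<in> space M \<Longrightarrow> 0 \<le> (1::real) \<and> (1::real) \<le> 1" by simp
      have one_p: "(0::real) < 1" by simp
      show "\<exists>A. A \<in> sets M \<and> {x\<in>space M. \<not> ((\<Sum>\<tau>\<in>{1..t}. (if I \<tau> x = j then 1 else 0) * 1)
            \<le> 1.25 * \<alpha> j * (\<Sum>\<tau>\<in>{1..t}. 1) + 4 * 1 * L)} \<subseteq> A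
           \<and> measure M A \<le> exp (- L)"
        using key[where M=M and F=F and I=I and T=T and d="\<lambda>_ _. 1" and D=1 and L=L and j=j and \<alpha>="\<alpha> j", OF M filt_sub filt_mono I_meas Idj I_indep one_m one_r one_p t]
        by (simp only: Bex_def)
    qed
    have c2m: "(\<lambda>x. (c t x)\<^sup>2) \<in> borel_measurable (F (t - 1))" if "t \<in> {1..T}" for t
      using c_meas[OF that] by (rule borel_measurable_power)
    have c2r: "0 \<le> (c t x)\<^sup>2 \<and> (c t x)\<^sup>2 \<le> cmax\<^sup>2" if "t \<in> {1..T}" "x \<in> space M" for t x
      using c_range[OF that] by (simp add: power_mono)
    have k3: "\<forall>t\<in>{1..T}. \<exists>A. A \<in> sets M \<and> {x\<in>space M. \<not> ((\<Sum>\<tau>\<in>{1..t}. (if I \<tau> x = j then 1 else 0) * (c \<tau> x)\<^sup>2)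
            \<le> 1.25 * \<alpha> j * (\<Sum>\<tau>\<in>{1..t}. (c \<tau> x)\<^sup>2) + 4 * cmax\<^sup>2 * L)} \<subseteq> A
           \<and> measure M A \<le> exp (- L)"
    proof (rule ballI)
      fix t assume t: "t \<in> {1..T}"
      have cp: "0 < cmax\<^sup>2" using cmax by simp
      show "\<exists>A. A \<in> sets M \<and> {x\<in>space M. \<not> ((\<Sum>\<tau>\<in>{1..t}. (if I \<tau> x = j then 1 else 0) * (c \<tau> x)\<^sup>2)
            \<le> 1.25 * \<alpha> j * (\<Sum>\<tau>\<in>{1..t}. (c \<tau> x)\<^sup>2) + 4 * cmax\<^sup>2 * L)} \<subseteq> A
           \<and> measure M A \<le> exp (- L)"
        using key[where M=M and F=F and I=I and T=T and d="\<lambda>t x. (c t x)\<^sup>2" and D="cmax\<^sup>2" and L=L and j=j and \<alpha>="\<alpha> j", OF M filt_sub filt_mono I_meas Idj I_indep c2m c2r cp t]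
        by (simp only: Bex_def)
    qed
    obtain A1 where A1: "\<forall>t\<in>{1..T}. A1 t \<in> sets M \<and> {x\<in>space M. \<not> ((\<Sum>\<tau>\<in>{1..t}. (if I \<tau> x = j then 1 else 0) * c \<tau> x)
            \<le> 1.25 * \<alpha> j * (\<Sum>\<tau>\<in>{1..t}. c \<tau> x) + 4 * cmax * L)} \<subseteq> A1 t
           \<and> measure M (A1 t) \<le> exp (- L)"
      using bchoice[OF k1] by blast
    obtain A2 where A2: "\<forall>t\<in>{1..T}. A2 t \<in> sets M \<and> {x\<in>space M. \<not> ((\<Sum>\<tau>\<in>{1..t}. (if I \<tau> x = j then 1 else 0) * 1)
            \<le> 1.25 * \<alpha> j * (\<Sum>\<tau>\<in>{1..t}. 1) + 4 * 1 * L)} \<subseteq> A2 t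
           \<and> measure M (A2 t) \<le> exp (- L)"
      using bchoice[OF k2] by blast
    obtain A3 where A3: "\<forall>t\<in>{1..T}. A3 t \<in> sets M \<and> {x\<in>space M. \<not> ((\<Sum>\<tau>\<in>{1..t}. (if I \<tau> x = j then 1 else 0) * (c \<tau> x)\<^sup>2)
            \<le> 1.25 * \<alpha> j * (\<Sum>\<tau>\<in>{1..t}. (c \<tau> x)\<^sup>2) + 4 * cmax\<^sup>2 * L)} \<subseteq> A3 t
           \<and> measure M (A3 t) \<le> exp (- L)"
      using bchoice[OF k3] by blast
    have Ubound: "measure M (\<Union>t\<in>{1..T}. A t) \<le> \<delta>"
      if "\<forall>t\<in>{1..T}. A t \<in> sets M \<and> measure M (A t) \<le> exp (- L)" for A
    proof -
      have "measure M (\<Union>t\<in>{1..T}. A t) \<le> (\<Sum>t\<in>{1..T}. measure M (A t))"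
        using that by (intro measure_UNION_le) auto
      also have "\<dots> \<le> (\<Sum>t\<in>{1..T}. \<delta> / real T)"
        using that eL by (intro sum_mono) auto
      also have "\<dots> = \<delta>" using T1 by simp
      finally show ?thesis .
    qed
    define U where "U = (\<Union>t\<in>{1..T}. A1 t) \<union> (\<Union>t\<in>{1..T}. A2 t) \<union> (\<Union>t\<in>{1..T}. A3 t)"
    have U1: "(\<Union>t\<in>{1..T}. A1 t) \<in> sets M" "(\<Union>t\<in>{1..T}. A2 t) \<in> sets M" "(\<Union>t\<in>{1..T}. A3 t) \<in> sets M"
      using A1 A2 A3 by auto
    have Us: "U \<in> sets M" unfolding U_def using U1 by auto
    have mU: "measure M U \<le> 3 * \<delta>"
    proof -
      have "measure M U \<le> measure M ((\<Union>t\<in>{1..T}. A1 t) \<union> (\<Union>t\<in>{1..T}. A2 t)) + measure M (\<Union>t\<in>{1..T}. A3 t)"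
        unfolding U_def using U1 by (intro measure_Un_le) auto
      also have "\<dots> \<le> measure M (\<Union>t\<in>{1..T}. A1 t) + measure M (\<Union>t\<in>{1..T}. A2 t) + measure M (\<Union>t\<in>{1..T}. A3 t)"
        using U1 measure_Un_le[of "(\<Union>t\<in>{1..T}. A1 t)" M "(\<Union>t\<in>{1..T}. A2 t)"] by simp
      also have "\<dots> \<le> \<delta> + \<delta> + \<delta>"
        using Ubound[of A1] Ubound[of A2] Ubound[of A3] A1 A2 A3 by (intro add_mono) auto
      finally show ?thesis by simp
    qed
    define Gd where "Gd = {x \<in> space M. \<forall>t\<in>{1..T}.
            Cai c I t j x \<le> 1.25 * \<alpha> j * Ca c t x + 21 * cmax * ln (real T / \<delta>)
          \<and> Cri c I t j x \<le> 1.25 * \<alpha> j * Cr c t x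
                 + 8 * cmax * sqrt (\<alpha> j * real t * ln (real T / \<delta>))
                 + 21 * cmax * ln (real T / \<delta>)}"
    have sumM: "(\<lambda>x. \<Sum>\<tau>\<in>{1..t}. f \<tau> x) \<in> borel_measurable M"
      if "t \<le> T" "\<And>\<tau>. \<tau> \<in> {1..T} \<Longrightarrow> f \<tau> \<in> borel_measurable M" for t and f :: "nat \<Rightarrow> 'a \<Rightarrow> real"
      using that by (intro borel_measurable_sum) auto
    have mCai: "Cai c I t j \<in> borel_measurable M" if "t \<le> T" for t
      unfolding Cai_def[abs_def]
      by (rule sumM[OF that]) (intro borel_measurable_times indM cM, assumption+)
    have mCa: "Ca c t \<in> borel_measurable M" if "t \<le> T" for t
      unfolding Ca_def[abs_def]
      by (rule sumM[OF that]) (rule cM)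
    have mN: "(\<lambda>x. \<Sum>\<tau>\<in>{1..t}. (if I \<tau> x = j then 1 else 0::real)) \<in> borel_measurable M" if "t \<le> T" for t
      by (rule sumM[OF that]) (rule indM)
    have mQ: "(\<lambda>x. \<Sum>\<tau>\<in>{1..t}. (if I \<tau> x = j then 1 else 0::real) * (c \<tau> x)\<^sup>2) \<in> borel_measurable M" if "t \<le> T" for t
      by (rule sumM[OF that]) (intro borel_measurable_times borel_measurable_power indM cM, assumption+)
    have mS: "(\<lambda>x. \<Sum>\<tau>\<in>{1..t}. (c \<tau> x)\<^sup>2) \<in> borel_measurable M" if "t \<le> T" for t
      by (rule sumM[OF that]) (intro borel_measurable_power cM, assumption+)
    have mCri: "Cri c I t j \<in> borel_measurable M" if "t \<le> T" for t
      unfolding Cri_def[abs_def]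
      using measurable_compose[OF borel_measurable_times[OF mN[OF that] mQ[OF that]] borel_measurable_sqrt] .
    have mCr: "Cr c t \<in> borel_measurable M" if "t \<le> T" for t
      unfolding Cr_def[abs_def]
      using measurable_compose[OF borel_measurable_times[OF borel_measurable_const mS[OF that]] borel_measurable_sqrt] .
    have Gds: "Gd \<in> sets M"
      unfolding Gd_def
    proof (rule sets.sets_Collect_finite_All)
      fix t assume t: "t \<in> {1..T}"
      then have tT: "t \<le> T" by simp
      show "{x \<in> space M. Cai c I t j x \<le> 1.25 * \<alpha> j * Ca c t x + 21 * cmax * ln (real T / \<delta>)
          \<and> Cri c I t j x \<le> 1.25 * \<alpha> j * Cr c t x
                 + 8 * cmax * sqrt (\<alpha> j * real t * ln (real T / \<delta>))
                 + 21 * cmax * ln (real T / \<delta>)} \<in> sets M"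
      proof (rule sets.sets_Collect_conj)
        show "{x \<in> space M. Cai c I t j x \<le> 1.25 * \<alpha> j * Ca c t x + 21 * cmax * ln (real T / \<delta>)} \<in> sets M"
          by (rule borel_measurable_le[OF mCai[OF tT]])
             (intro borel_measurable_add borel_measurable_times borel_measurable_const mCa[OF tT])
        show "{x \<in> space M. Cri c I t j x \<le> 1.25 * \<alpha> j * Cr c t x
                 + 8 * cmax * sqrt (\<alpha> j * real t * ln (real T / \<delta>))
                 + 21 * cmax * ln (real T / \<delta>)} \<in> sets M"
          by (rule borel_measurable_le[OF mCri[OF tT]])
             (intro borel_measurable_add borel_measurable_times borel_measurable_const mCr[OF tT])
      qed
    qed simp
    have sub: "space M - U \<subseteq> Gd"
    proof
      fix x assume xU: "x \<in> space M - U"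
      then have x: "x \<in> space M" by simp
      have LL: "ln (real T / \<delta>) = L" by (simp add: L_def)
      have "\<forall>t\<in>{1..T}.
            Cai c I t j x \<le> 1.25 * \<alpha> j * Ca c t x + 21 * cmax * ln (real T / \<delta>)
          \<and> Cri c I t j x \<le> 1.25 * \<alpha> j * Cr c t x
                 + 8 * cmax * sqrt (\<alpha> j * real t * ln (real T / \<delta>))
                 + 21 * cmax * ln (real T / \<delta>)"
      proof (rule ballI)
        fix t assume t: "t \<in> {1..T}"
        have n1: "x \<notin> A1 t" "x \<notin> A2 t" "x \<notin> A3 t" using xU t unfolding U_def by auto
        have i1: "(\<Sum>\<tau>\<in>{1..t}. (if I \<tau> x = j then 1 else 0) * c \<tau> x)
            \<le> 1.25 * \<alpha> j * (\<Sum>\<tau>\<in>{1..t}. c \<tau> x) + 4 * cmax * L"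
        proof (rule ccontr)
          assume "\<not> ?thesis"
          then have "x \<in> A1 t" using A1 t x by blast
          then show False using n1 by simp
        qed
        have i2: "(\<Sum>\<tau>\<in>{1..t}. (if I \<tau> x = j then 1 else 0) * 1)
            \<le> 1.25 * \<alpha> j * (\<Sum>\<tau>\<in>{1..t}. 1) + 4 * 1 * L"
        proof (rule ccontr)
          assume "\<not> ?thesis"
          then have "x \<in> A2 t" using A2 t x by blast
          then show False using n1 by simp
        qed
        have i3: "(\<Sum>\<tau>\<in>{1..t}. (if I \<tau> x = j then 1 else 0) * (c \<tau> x)\<^sup>2)
            \<le> 1.25 * \<alpha> j * (\<Sum>\<tau>\<in>{1..t}. (c \<tau> x)\<^sup>2) + 4 * cmax\<^sup>2 * L"
        proof (rule ccontr)
          assume "\<not> ?thesis"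
          then have "x \<in> A3 t" using A3 t x by blast
          then show False using n1 by simp
        qed
        have "4 * cmax * L \<le> 21 * cmax * L" using cmax L0 by simp
        then have r1: "Cai c I t j x \<le> 1.25 * \<alpha> j * Ca c t x + 21 * cmax * ln (real T / \<delta>)"
          using i1 unfolding Cai_def Ca_def LL by linarith
        define N where "N = (\<Sum>\<tau>\<in>{1..t}. (if I \<tau> x = j then 1 else 0::real))"
        define Q where "Q = (\<Sum>\<tau>\<in>{1..t}. (if I \<tau> x = j then 1 else 0) * (c \<tau> x)\<^sup>2)"
        define S where "S = (\<Sum>\<tau>\<in>{1..t}. (c \<tau> x)\<^sup>2)"
        have N0: "0 \<le> N" unfolding N_def by (intro sum_nonneg) auto
        have Q0: "0 \<le> Q" unfolding Q_def by (intro sum_nonneg) auto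
        have S0: "0 \<le> S" unfolding S_def by (intro sum_nonneg) auto
        have tsub: "\<And>\<tau>. \<tau> \<in> {1..t} \<Longrightarrow> \<tau> \<in> {1..T}" using t by auto
        have "S \<le> (\<Sum>\<tau>\<in>{1..t}. cmax\<^sup>2)" unfolding S_def
          using c2r[OF tsub x] by (intro sum_mono) auto
        then have St: "S \<le> real t * cmax\<^sup>2" by simp
        have hN: "N \<le> 1.25 * \<alpha> j * real t + 4 * 1 * L" using i2 unfolding N_def by simp
        have hQ: "Q \<le> 1.25 * \<alpha> j * S + 4 * cmax\<^sup>2 * L" using i3 unfolding Q_def S_def .
        have "sqrt (N * Q) \<le> 1.25 * \<alpha> j * sqrt (real t * S) + 8 * cmax * sqrt (\<alpha> j * real t * L) + 21 * cmax * L"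
          by (rule alg[OF N0 Q0 S0 St aj0 cmax less_imp_le[OF L0] _ hN hQ]) simp
        then have r2: "Cri c I t j x \<le> 1.25 * \<alpha> j * Cr c t x
                 + 8 * cmax * sqrt (\<alpha> j * real t * ln (real T / \<delta>))
                 + 21 * cmax * ln (real T / \<delta>)"
          unfolding Cri_def Cr_def LL N_def Q_def S_def .
        show "Cai c I t j x \<le> 1.25 * \<alpha> j * Ca c t x + 21 * cmax * ln (real T / \<delta>)
          \<and> Cri c I t j x \<le> 1.25 * \<alpha> j * Cr c t x
                 + 8 * cmax * sqrt (\<alpha> j * real t * ln (real T / \<delta>))
                 + 21 * cmax * ln (real T / \<delta>)" using r1 r2 by blast
      qed
      then show "x \<in> Gd" unfolding Gd_def using x by blast
    qed
    have "1 - 3 * \<delta> \<le> 1 - measure M U" using mU by simp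
    also have "\<dots> = measure M (space M - U)" using P.prob_compl[OF Us] by simp
    also have "\<dots> \<le> measure M Gd" using sub Gds by (rule P.finite_measure_mono)
    finally show ?thesis unfolding Gd_def .
  qed
qed


end
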